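(* Let $k,n\ge1$ and $T:\{0,1\}^k\to\{0,1\}$ be a truth table. Assume that for every triple $(\mathbf z^{[1]},\mathbf z^{[0]},\mathbf z^{[-1]})$ of $n$-bit strings and every nonempty $S\subseteq\{1,0,-1\}$, the probability $\mathbf E_\sigma\mathbf 1[\mathbf z^{[t]}\not\vdash\sigma\ \forall t\in S]$ depends on the triple only through its configuration basis numbers $(n_s)_{s\in\{0,1\}^3}$ and is a polynomial in the quantities $n_s+n_{\bar s}$. Then for every function $f:\{0,1\}^3\to\mathbb C$, the expectation $$\mathbf E_\sigma f\big(\mathbf 1[\mathbf z^{[1]}\not\vdash\sigma],\mathbf 1[\mathbf z^{[0]}\not\vdash\sigma],\mathbf 1[\mathbf z^{[-1]}\not\vdash\sigma]\big)$$ is a polynomial in the quantities $n_s+n_{\bar s}$, $s\in\{0,1\}^3$.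
   Context: A clause on $n$ variables is $\sigma=((l_0,\nu_0),\dots,(l_{k-1},\nu_{k-1}))$ with $l_q\in\{0,\dots,n-1\}$, $\nu_q\in\{0,1\}$; $\mathbf x\in\{0,1\}^n$ satisfies $\sigma$ ($\mathbf x\vdash\sigma$) iff $T(x_{l_0}\oplus\nu_0,\dots,x_{l_{k-1}}\oplus\nu_{k-1})=1$, and violates it ($\mathbf x\not\vdash\sigma$) otherwise. A random clause has all $l_q$ independent uniform in $\{0,\dots,n-1\}$ and all $\nu_q$ independent uniform in $\{0,1\}$; $\mathbf E_\sigma$ is expectation over it. Configuration basis numbers of the triple: $n_s=|\{j:(z^{[1]}_j,z^{[0]}_j,z^{[-1]}_j)=s\}|$; $\bar s$ is the bitwise complement of $s$. *)

theory Defs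
  imports Complex_Main
begin

type_synonym clause = "(nat \<times> bool) list"
type_synonym config = "bool \<times> bool \<times> bool"

definition clauses :: "nat \<Rightarrow> nat \<Rightarrow> clause set" where
  "clauses n k = {\<sigma>. length \<sigma> = k \<and> (\<forall>p\<in>set \<sigma>. fst p < n)}"

definition Eclause :: "nat \<Rightarrow> nat \<Rightarrow> (clause \<Rightarrow> 'a::field) \<Rightarrow> 'a" where
  "Eclause n k g = (\<Sum>\<sigma>\<in>clauses n k. g \<sigma>) / of_nat (card (clauses n k))"

definition sat :: "(bool list \<Rightarrow> bool) \<Rightarrow> (nat \<Rightarrow> bool) \<Rightarrow> clause \<Rightarrow> bool" where
  "sat T x \<sigma> = T (map (\<lambda>(l, \<nu>). x l \<noteq> \<nu>) \<sigma>)"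

text \<open>Configuration basis numbers n_s of the triple z 1, z 0, z (-1).\<close>
definition cfg_num :: "nat \<Rightarrow> (int \<Rightarrow> nat \<Rightarrow> bool) \<Rightarrow> config \<Rightarrow> nat" where
  "cfg_num n z s = card {j. j < n \<and> (z 1 j, z 0 j, z (-1) j) = s}"

definition compl_cfg :: "config \<Rightarrow> config" where
  "compl_cfg s = (case s of (a, b, c) \<Rightarrow> (\<not> a, \<not> b, \<not> c))"

definition sym_num :: "nat \<Rightarrow> (int \<Rightarrow> nat \<Rightarrow> bool) \<Rightarrow> config \<Rightarrow> nat" where
  "sym_num n z s = cfg_num n z s + cfg_num n z (compl_cfg s)"

definition is_poly :: "((config \<Rightarrow> nat) \<Rightarrow> 'a::comm_ring_1) \<Rightarrow> bool" where
  "is_poly P \<longleftrightarrow> (\<exists>(D::nat) (c :: (config \<Rightarrow> nat) \<Rightarrow> 'a).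
     \<forall>m. P m = (\<Sum>e\<in>{e. \<forall>s. e s \<le> D}. c e * (\<Prod>s\<in>UNIV. of_nat (m s) ^ e s)))"

end

theory Submission
  imports Defs "HOL-Library.FuncSet"
begin

lemma fin_exps: "finite {e::config\<Rightarrow>nat. \<forall>s. e s \<le> D}"
proof -
  have "{e::config\<Rightarrow>nat. \<forall>s. e s \<le> D} \<subseteq> PiE UNIV (\<lambda>_. {..D})" by (auto simp: PiE_def Pi_def)
  thus ?thesis by (rule finite_subset) (intro finite_PiE, auto)
qed

lemma poly_const: "is_poly (\<lambda>m. c)"
proof -
  have "{e::config\<Rightarrow>nat. \<forall>s. e s \<le> 0} = {\<lambda>_. 0}" by auto
  thus ?thesis unfolding is_poly_def
    by (intro exI[of _ 0] exI[of _ "\<lambda>e. c"]) simp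
qed

lemma poly_add:
  assumes "is_poly (P::(config \<Rightarrow> nat) \<Rightarrow> 'a::comm_ring_1)" "is_poly Q"
  shows "is_poly (\<lambda>m. P m + Q m)"
proof -
  obtain D1 c1 where h1: "\<forall>m. P m = (\<Sum>e\<in>{e. \<forall>s. e s \<le> D1}. c1 e * (\<Prod>s\<in>UNIV. of_nat (m s) ^ e s))"
    using assms(1) unfolding is_poly_def by blast
  obtain D2 c2 where h2: "\<forall>m. Q m = (\<Sum>e\<in>{e. \<forall>s. e s \<le> D2}. c2 e * (\<Prod>s\<in>UNIV. of_nat (m s) ^ e s))"
    using assms(2) unfolding is_poly_def by blast
  define D where "D = max D1 D2"
  define c where "c e = (if \<forall>s. e s \<le> D1 then c1 e else 0) + (if \<forall>s. e s \<le> D2 then c2 e else 0)" for e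
  have sub: "\<And>Di ci (m::config\<Rightarrow>nat). Di \<le> D \<Longrightarrow>
     (\<Sum>e\<in>{e. \<forall>s. e s \<le> Di}. ci e * (\<Prod>s\<in>UNIV. of_nat (m s) ^ e s)) =
     (\<Sum>e\<in>{e. \<forall>s. e s \<le> D}. (if \<forall>s. e s \<le> Di then ci e else 0) * (\<Prod>s\<in>UNIV. (of_nat (m s)::'a) ^ e s))"
  proof -
    fix Di ci and m :: "config\<Rightarrow>nat" assume "Di \<le> D"
    have "(\<Sum>e\<in>{e. \<forall>s. e s \<le> Di}. ci e * (\<Prod>s\<in>UNIV. (of_nat (m s)::'a) ^ e s)) =
       (\<Sum>e\<in>{e. \<forall>s. e s \<le> Di}. (if \<forall>s. e s \<le> Di then ci e else 0) * (\<Prod>s\<in>UNIV. (of_nat (m s)::'a) ^ e s))"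
      by (rule sum.cong) auto
    also have "\<dots> = (\<Sum>e\<in>{e. \<forall>s. e s \<le> D}. (if \<forall>s. e s \<le> Di then ci e else 0) * (\<Prod>s\<in>UNIV. (of_nat (m s)::'a) ^ e s))"
      proof (rule sum.mono_neutral_left[OF fin_exps])
        show "{e::config\<Rightarrow>nat. \<forall>s. e s \<le> Di} \<subseteq> {e. \<forall>s. e s \<le> D}"
          using \<open>Di \<le> D\<close> order_trans by blast
      qed auto
    finally show "(\<Sum>e\<in>{e. \<forall>s. e s \<le> Di}. ci e * (\<Prod>s\<in>UNIV. of_nat (m s) ^ e s)) =
     (\<Sum>e\<in>{e. \<forall>s. e s \<le> D}. (if \<forall>s. e s \<le> Di then ci e else 0) * (\<Prod>s\<in>UNIV. (of_nat (m s)::'a) ^ e s))" .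
  qed
  show ?thesis unfolding is_poly_def
  proof (intro exI[of _ D] exI[of _ c] allI)
    fix m
    show "P m + Q m = (\<Sum>e\<in>{e. \<forall>s. e s \<le> D}. c e * (\<Prod>s\<in>UNIV. of_nat (m s) ^ e s))"
      unfolding h1[rule_format] h2[rule_format] sub[of D1, OF max.cobounded1[of D1 D2, folded D_def]]
        sub[of D2, OF max.cobounded2[of D2 D1, folded max.commute, folded D_def]]
      by (simp add: c_def sum.distrib distrib_right)
  qed
qed

lemma poly_comb:
  assumes "is_poly (P::(config \<Rightarrow> nat) \<Rightarrow> real)"
  shows "is_poly (\<lambda>m. a * (of_real (P m) :: complex))"
proof -
  obtain D c where h: "\<forall>m. P m = (\<Sum>e\<in>{e. \<forall>s. e s \<le> D}. c e * (\<Prod>s\<in>UNIV. of_nat (m s) ^ e s))"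
    using assms unfolding is_poly_def by blast
  show ?thesis unfolding is_poly_def
    by (intro exI[of _ D] exI[of _ "\<lambda>e. a * of_real (c e)"] allI)
      (simp add: h sum_distrib_left of_real_sum of_real_prod mult.assoc)
qed

lemma E_add: "Eclause n k (\<lambda>\<sigma>. g \<sigma> + h \<sigma>) = Eclause n k g + Eclause n k h"
  unfolding Eclause_def by (simp add: sum.distrib add_divide_distrib)

lemma E_mult: "Eclause n k (\<lambda>\<sigma>. c * g \<sigma>) = c * Eclause n k g"
  unfolding Eclause_def by (simp add: sum_distrib_left)

lemma E_of_real: "Eclause n k (\<lambda>\<sigma>. of_real (g \<sigma>) :: complex) = of_real (Eclause n k g)"
  unfolding Eclause_def by (simp add: of_real_sum)

lemma E_const: "Eclause n k (\<lambda>\<sigma>. c) = c * Eclause n k (\<lambda>_. 1)"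
  unfolding Eclause_def by simp

lemma decomp:
  fixes f :: "config \<Rightarrow> complex"
  shows "f (a, b, c) =
    f (False,False,False)
  + (f (True,False,False) - f (False,False,False)) * of_real (if a then 1 else 0)
  + (f (False,True,False) - f (False,False,False)) * of_real (if b then 1 else 0)
  + (f (False,False,True) - f (False,False,False)) * of_real (if c then 1 else 0)
  + (f (True,True,False) - f (True,False,False) - f (False,True,False) + f (False,False,False))
      * of_real (if a \<and> b then 1 else 0)
  + (f (True,False,True) - f (True,False,False) - f (False,False,True) + f (False,False,False))
      * of_real (if a \<and> c then 1 else 0)
  + (f (False,True,True) - f (False,True,False) - f (False,False,True) + f (False,False,False))
      * of_real (if b \<and> c then 1 else 0)
  + (f (True,True,True) - f (True,True,False) - f (True,False,True) - f (False,True,True)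
     + f (True,False,False) + f (False,True,False) + f (False,False,True) - f (False,False,False))
      * of_real (if a \<and> b \<and> c then 1 else 0)"
  by (cases a; cases b; cases c) (simp_all add: algebra_simps)

theorem mainTheorem5:
  fixes k n :: nat and T :: "bool list \<Rightarrow> bool"
  assumes "k \<ge> 1" and "n \<ge> 1"
  assumes hyp: "\<And>S :: int set. S \<subseteq> {1, 0, -1} \<Longrightarrow> S \<noteq> {} \<Longrightarrow>
      (\<forall>z z'. cfg_num n z = cfg_num n z' \<longrightarrow>
          Eclause n k (\<lambda>\<sigma>. if \<forall>t\<in>S. \<not> sat T (z t) \<sigma> then 1 else 0)
        = (Eclause n k (\<lambda>\<sigma>. if \<forall>t\<in>S. \<not> sat T (z' t) \<sigma> then 1 else 0) :: real))
      \<and> (\<exists>P :: (config \<Rightarrow> nat) \<Rightarrow> real. is_poly P \<and>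
           (\<forall>z. Eclause n k (\<lambda>\<sigma>. if \<forall>t\<in>S. \<not> sat T (z t) \<sigma> then 1 else 0)
                = P (sym_num n z)))"
  shows "\<forall>f :: config \<Rightarrow> complex. \<exists>P :: (config \<Rightarrow> nat) \<Rightarrow> complex. is_poly P \<and>
           (\<forall>z. Eclause n k (\<lambda>\<sigma>. f (\<not> sat T (z 1) \<sigma>, \<not> sat T (z 0) \<sigma>, \<not> sat T (z (-1)) \<sigma>))
                = P (sym_num n z))"
proof
  fix f :: "config \<Rightarrow> complex"
  define E where "E S z = Eclause n k (\<lambda>\<sigma>. if \<forall>t\<in>S. \<not> sat T (z t) \<sigma> then 1 else 0 :: real)"
    for S :: "int set" and z
  have H: "\<exists>P. is_poly P \<and> (\<forall>z. E S z = P (sym_num n z))"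
    if "S \<subseteq> {1, 0, -1}" "S \<noteq> {}" for S
    using hyp[OF that] unfolding E_def by blast
  obtain P1 where P1: "is_poly P1" "\<forall>z. E {1} z = P1 (sym_num n z)" using H[of "{1}"] by auto
  obtain P2 where P2: "is_poly P2" "\<forall>z. E {0} z = P2 (sym_num n z)" using H[of "{0}"] by auto
  obtain P3 where P3: "is_poly P3" "\<forall>z. E {-1} z = P3 (sym_num n z)" using H[of "{-1}"] by auto
  obtain P4 where P4: "is_poly P4" "\<forall>z. E {1,0} z = P4 (sym_num n z)" using H[of "{1,0}"] by auto
  obtain P5 where P5: "is_poly P5" "\<forall>z. E {1,-1} z = P5 (sym_num n z)" using H[of "{1,-1}"] by auto
  obtain P6 where P6: "is_poly P6" "\<forall>z. E {0,-1} z = P6 (sym_num n z)" using H[of "{0,-1}"] by auto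
  obtain P7 where P7: "is_poly P7" "\<forall>z. E {1,0,-1} z = P7 (sym_num n z)" using H[of "{1,0,-1}"] by auto
  define c0 where "c0 = f (False,False,False)"
  define c1 where "c1 = f (True,False,False) - f (False,False,False)"
  define c2 where "c2 = f (False,True,False) - f (False,False,False)"
  define c3 where "c3 = f (False,False,True) - f (False,False,False)"
  define c4 where "c4 = f (True,True,False) - f (True,False,False) - f (False,True,False) + f (False,False,False)"
  define c5 where "c5 = f (True,False,True) - f (True,False,False) - f (False,False,True) + f (False,False,False)"
  define c6 where "c6 = f (False,True,True) - f (False,True,False) - f (False,False,True) + f (False,False,False)"
  define c7 where "c7 = f (True,True,True) - f (True,True,False) - f (True,False,True) - f (False,True,True)
     + f (True,False,False) + f (False,True,False) + f (False,False,True) - f (False,False,False)"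
  define K where "K = c0 * Eclause n k (\<lambda>_. 1::complex)"
  define P where "P m = K + c1 * of_real (P1 m) + c2 * of_real (P2 m) + c3 * of_real (P3 m)
     + c4 * of_real (P4 m) + c5 * of_real (P5 m) + c6 * of_real (P6 m) + c7 * of_real (P7 m)" for m
  show "\<exists>P. is_poly P \<and>
           (\<forall>z. Eclause n k (\<lambda>\<sigma>. f (\<not> sat T (z 1) \<sigma>, \<not> sat T (z 0) \<sigma>, \<not> sat T (z (-1)) \<sigma>))
                = P (sym_num n z))"
  proof (intro exI[of _ P] conjI allI)
    show "is_poly P" unfolding P_def
      by (intro poly_add poly_const poly_comb P1 P2 P3 P4 P5 P6 P7)
  next
    fix z :: "int \<Rightarrow> nat \<Rightarrow> bool"
    let ?a = "\<lambda>\<sigma>. \<not> sat T (z 1) \<sigma>" and ?b = "\<lambda>\<sigma>. \<not> sat T (z 0) \<sigma>" and ?c = "\<lambda>\<sigma>. \<not> sat T (z (-1)) \<sigma>"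
    have pw: "f (?a \<sigma>, ?b \<sigma>, ?c \<sigma>) = c0
      + c1 * of_real (if ?a \<sigma> then 1 else 0)
      + c2 * of_real (if ?b \<sigma> then 1 else 0)
      + c3 * of_real (if ?c \<sigma> then 1 else 0)
      + c4 * of_real (if ?a \<sigma> \<and> ?b \<sigma> then 1 else 0)
      + c5 * of_real (if ?a \<sigma> \<and> ?c \<sigma> then 1 else 0)
      + c6 * of_real (if ?b \<sigma> \<and> ?c \<sigma> then 1 else 0)
      + c7 * of_real (if ?a \<sigma> \<and> ?b \<sigma> \<and> ?c \<sigma> then 1 else 0)" for \<sigma>
      unfolding c0_def c1_def c2_def c3_def c4_def c5_def c6_def c7_def by (rule decomp)
    have e1: "E {1} z = Eclause n k (\<lambda>\<sigma>. if ?a \<sigma> then 1 else 0)" unfolding E_def by simp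
    have e2: "E {0} z = Eclause n k (\<lambda>\<sigma>. if ?b \<sigma> then 1 else 0)" unfolding E_def by simp
    have e3: "E {-1} z = Eclause n k (\<lambda>\<sigma>. if ?c \<sigma> then 1 else 0)" unfolding E_def by simp
    have e4: "E {1,0} z = Eclause n k (\<lambda>\<sigma>. if ?a \<sigma> \<and> ?b \<sigma> then 1 else 0)" unfolding E_def by simp
    have e5: "E {1,-1} z = Eclause n k (\<lambda>\<sigma>. if ?a \<sigma> \<and> ?c \<sigma> then 1 else 0)" unfolding E_def by simp
    have e6: "E {0,-1} z = Eclause n k (\<lambda>\<sigma>. if ?b \<sigma> \<and> ?c \<sigma> then 1 else 0)" unfolding E_def by simp
    have e7: "E {1,0,-1} z = Eclause n k (\<lambda>\<sigma>. if ?a \<sigma> \<and> ?b \<sigma> \<and> ?c \<sigma> then 1 else 0)" unfolding E_def by simp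
    have "Eclause n k (\<lambda>\<sigma>. f (?a \<sigma>, ?b \<sigma>, ?c \<sigma>)) = K
      + c1 * of_real (E {1} z) + c2 * of_real (E {0} z) + c3 * of_real (E {-1} z)
      + c4 * of_real (E {1,0} z) + c5 * of_real (E {1,-1} z) + c6 * of_real (E {0,-1} z)
      + c7 * of_real (E {1,0,-1} z)"
      unfolding pw e1 e2 e3 e4 e5 e6 e7 K_def
      by (simp only: E_add E_mult E_of_real E_const[of n k c0])
    also have "\<dots> = P (sym_num n z)"
      unfolding P_def using P1 P2 P3 P4 P5 P6 P7 by simp
    finally show "Eclause n k (\<lambda>\<sigma>. f (?a \<sigma>, ?b \<sigma>, ?c \<sigma>)) = P (sym_num n z)" .
  qed
qed

end
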